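(* Let $\omega>0$, $T=2\pi/\omega$, and let $H(t)=\begin{pmatrix} a(t) & b(t)\\ b^*(t) & c(t)\end{pmatrix}$ be a continuous $T$-periodic family of $2\times 2$ Hermitian matrices (so $a,c$ real-valued) such that $[H(t),G(t)]=0$ for all $t$, where $G(t)=\begin{pmatrix}0 & e^{-i\omega t}\\ 1 & 0\end{pmatrix}$. Then $a(t)=c(t)$ and $b(t)=b^*(t)e^{-i\omega t}$ for all $t$, and there exists $t$ with $b(t)=0$; in particular the two instantaneous eigenvalues of $H(t)$ coincide at some time $t$ (the spectrum is gapless). *)

theory Defs
  imports "HOL-Analysis.Analysis"
begin

definition mat2 :: "complex \<Rightarrow> complex \<Rightarrow> complex \<Rightarrow> complex \<Rightarrow> complex^2^2" where
  "mat2 x11 x12 x21 x22 = vector [vector [x11, x12], vector [x21, x22]]"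

definition hamH :: "(real \<Rightarrow> real) \<Rightarrow> (real \<Rightarrow> complex) \<Rightarrow> (real \<Rightarrow> real) \<Rightarrow> real \<Rightarrow> complex^2^2" where
  "hamH a b c t = mat2 (complex_of_real (a t)) (b t) (cnj (b t)) (complex_of_real (c t))"

definition symG :: "real \<Rightarrow> real \<Rightarrow> complex^2^2" where
  "symG \<omega> t = mat2 0 (exp (- \<i> * complex_of_real (\<omega> * t))) 1 0"

definition is_eigenvalue :: "complex^2^2 \<Rightarrow> complex \<Rightarrow> bool" where
  "is_eigenvalue M l \<longleftrightarrow> (\<exists>v. v \<noteq> 0 \<and> M *v v = l *s v)"

end

theory Submission
  imports Defs
begin

lemma ents: "(mat2 x11 x12 x21 x22) $ 1 $ 1 = x11" "(mat2 x11 x12 x21 x22) $ 1 $ 2 = x12"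
  "(mat2 x11 x12 x21 x22) $ 2 $ 1 = x21" "(mat2 x11 x12 x21 x22) $ 2 $ 2 = x22"
  by (simp_all add: mat2_def)

lemma mm: "((M::complex^2^2) ** N) $ i $ j = M$i$1 * N$1$j + M$i$2*N$2$j"
  by (simp add: matrix_matrix_mult_def sum_2)

lemma u_props: "exp (- \<i> * complex_of_real (w * t)) = cnj (exp (\<i> * of_real (w*t/2)))^2"
  "cnj (exp (\<i> * of_real (w*t/2))) * exp (\<i> * of_real (w*t/2)) = 1"
proof -
  show "cnj (exp (\<i> * of_real (w*t/2))) * exp (\<i> * of_real (w*t/2)) = 1"
    by (simp add: exp_cnj flip: exp_add)
  show "exp (- \<i> * complex_of_real (w * t)) = cnj (exp (\<i> * of_real (w*t/2)))^2"
    by (simp add: exp_cnj flip: exp_of_nat_mult)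
qed

theorem mainTheorem3:
  fixes \<omega> T :: real and a c :: "real \<Rightarrow> real" and b :: "real \<Rightarrow> complex"
  assumes "\<omega> > 0" and "T = 2 * pi / \<omega>"
    and "continuous_on UNIV a" and "continuous_on UNIV b" and "continuous_on UNIV c"
    and "\<And>t. a (t + T) = a t" and "\<And>t. b (t + T) = b t" and "\<And>t. c (t + T) = c t"
    and "\<And>t. hamH a b c t ** symG \<omega> t = symG \<omega> t ** hamH a b c t"
  shows "(\<forall>t. a t = c t \<and> b t = cnj (b t) * exp (- \<i> * complex_of_real (\<omega> * t)))
       \<and> (\<exists>t. b t = 0)
       \<and> (\<exists>t \<mu>. \<forall>l. is_eigenvalue (hamH a b c t) l \<longrightarrow> l = \<mu>)"
proof -
  have P: "a t = c t \<and> b t = cnj (b t) * exp (- \<i> * complex_of_real (\<omega> * t))" for t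
  proof -
    let ?e = "exp (- \<i> * complex_of_real (\<omega> * t))"
    have E: "(hamH a b c t ** symG \<omega> t) $ i $ j = (symG \<omega> t ** hamH a b c t) $ i $ j" for i j
      using assms(9)[of t] by simp
    from E[of 1 1] have 1: "b t = ?e * cnj (b t)" by (simp add: mm hamH_def symG_def ents)
    from E[of 1 2] have 2: "of_real (a t) * ?e = ?e * of_real (c t)" by (simp add: mm hamH_def symG_def ents)
    have "?e \<noteq> 0" by simp
    with 2 have "complex_of_real (a t) = of_real (c t)" by (simp add: mult.commute)
    then show ?thesis using 1 by (simp add: mult.commute)
  qed
  define u where "u t = exp (\<i> * complex_of_real (\<omega>*t/2))" for t
  define f where "f t = b t * u t" for t
  have freal: "f t = of_real (Re (f t))" for t
  proof -
    have "f t = cnj (u t)^2 * u t * cnj (b t)"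
      using P[of t] u_props(1)[of \<omega> t] unfolding f_def u_def by (simp add: mult.commute)
    also have "\<dots> = cnj (u t) * cnj (b t)"
      using u_props(2)[of \<omega> t] unfolding u_def by (simp add: power2_eq_square)
    also have "\<dots> = cnj (f t)" unfolding f_def by simp
    finally have "f t = cnj (f t)" .
    then show ?thesis by (metis Reals_cnj_iff complex_is_Real_iff of_real_Re)
  qed
  have uT: "u (t + T) = - u t" for t
  proof -
    have "\<omega> * (t + T) / 2 = \<omega> * t / 2 + pi" using assms(1,2) by (simp add: field_simps)
    then have "u (t+T) = exp (\<i> * of_real (\<omega> * t / 2) + \<i> * of_real pi)" unfolding u_def
      by (metis distrib_left of_real_add)
    also have "\<dots> = u t * exp (\<i> * of_real pi)" unfolding u_def by (simp add: exp_add)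
    finally show ?thesis by simp
  qed
  define g where "g t = Re (f t)" for t
  have gT: "g T = - g 0" unfolding g_def f_def using uT[of 0] assms(7)[of 0] by simp
  have contu: "continuous_on UNIV u" unfolding u_def by (intro continuous_intros) auto
  have contg: "continuous_on UNIV g" unfolding g_def f_def
    using assms(4) contu by (intro continuous_intros) auto
  have isc: "isCont g x" for x using contg by (simp add: continuous_on_eq_continuous_at)
  have T0: "T > 0" using assms(1,2) by simp
  have "\<exists>t. g t = 0"
  proof (cases "g 0 \<le> 0")
    case True
    then have "g 0 \<le> 0" "0 \<le> g T" using gT by auto
    then obtain x where "0 \<le> x" "x \<le> T" "g x = 0"
      using IVT[of g 0 0 T] T0 isc by auto
    then show ?thesis by blast
  next
    case False
    then have "g T \<le> 0" "0 \<le> g 0" using gT by auto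
    then obtain x where "0 \<le> x" "x \<le> T" "g x = 0"
      using IVT2[of g T 0 0] T0 isc by auto
    then show ?thesis by blast
  qed
  then obtain t0 where "g t0 = 0" by blast
  then have "f t0 = 0" using freal[of t0] unfolding g_def by simp
  moreover have "u t0 \<noteq> 0" unfolding u_def by simp
  ultimately have b0: "b t0 = 0" unfolding f_def by simp
  have "\<forall>l. is_eigenvalue (hamH a b c t0) l \<longrightarrow> l = of_real (a t0)"
  proof (intro allI impI)
    fix l assume "is_eigenvalue (hamH a b c t0) l"
    then obtain v where v: "v \<noteq> 0" "hamH a b c t0 *v v = l *s v" unfolding is_eigenvalue_def by blast
    have "hamH a b c t0 = (\<chi> i j. if i = j then of_real (a t0) else 0)"
      using b0 P[of t0] unfolding hamH_def
      by (simp add: vec_eq_iff forall_2 ents)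
    then have "hamH a b c t0 *v v = of_real (a t0) *s v"
      by (simp add: vec_eq_iff matrix_vector_mult_def sum_2 forall_2)
    with v have "(l - of_real (a t0)) *s v = 0" by (simp add: algebra_simps)
    with v(1) show "l = of_real (a t0)" by simp
  qed
  then show ?thesis using P b0 by blast
qed

end
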